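(* Let $(M,F)$ be a $C3$-like Finsler space, i.e. there are covariant vector fields $a_k,b_k$ with $C_{ijk}=h_{ij}a_k+h_{jk}a_i+h_{ki}a_j+C_iC_jb_k+C_jC_kb_i+C_kC_ib_j$, where $a_k=\frac1F\big(I\,m_k+\frac{J}{3}n_k\big)$ with $m_k=C_k/C$, $n_k$ a unit vector orthogonal to $l_k$ and $m_k$, and $I,J$ scalar functions. Suppose $(M,F)$ admits a nonzero semi-concurrent vector field $B^i(x)$. If $J=0$, then $(M,F)$ is Riemannian, i.e. $C_{ijk}=0$.
   Context: $(M,F)$ is a Finsler manifold with metric tensor $g_{ij}=\frac12\dot\partial_i\dot\partial_j F^2$, $l_i=\dot\partial_iF$, angular metric $h_{ij}=g_{ij}-l_il_j$, Cartan tensor $C_{ijk}=\frac12\dot\partial_k g_{ij}$, $C_k=g^{ij}C_{ijk}$, $C^2=g^{ij}C_iC_j$. A vector field $B^i(x)$ on $M$ is semi-concurrent if $B^hC_{hij}=0$. The space is Riemannian if $C_{ijk}\equiv0$. *)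

theory Defs
  imports "HOL-Analysis.Analysis"
begin

text \<open>Local-coordinate model of a Finsler manifold: M is represented by a coordinate
  domain U (open subset of R^n, n = CARD('n)), the tangent bundle by U \<times> R^n,
  F is a function of (x,y).\<close>

definition dirderiv :: "('a::euclidean_space \<Rightarrow> real) \<Rightarrow> 'a \<Rightarrow> 'a \<Rightarrow> real" where
  "dirderiv f v z = deriv (\<lambda>t. f (z + t *\<^sub>R v)) 0"

fun iter_dirderiv :: "'a::euclidean_space list \<Rightarrow> ('a \<Rightarrow> real) \<Rightarrow> 'a \<Rightarrow> real" where
  "iter_dirderiv [] f = f"
| "iter_dirderiv (v # vs) f = dirderiv (iter_dirderiv vs f) v"

definition smooth_on :: "'a::euclidean_space set \<Rightarrow> ('a \<Rightarrow> real) \<Rightarrow> bool" where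
  "smooth_on S f \<longleftrightarrow> open S \<and>
     (\<forall>vs. set vs \<subseteq> Basis \<longrightarrow>
        continuous_on S (iter_dirderiv vs f) \<and>
        (\<forall>z\<in>S. \<forall>v\<in>Basis. (\<lambda>t. iter_dirderiv vs f (z + t *\<^sub>R v)) differentiable (at 0)))"

definition vd :: "'n::finite \<Rightarrow> (real^'n \<Rightarrow> real^'n \<Rightarrow> real) \<Rightarrow> real^'n \<Rightarrow> real^'n \<Rightarrow> real" where
  "vd i f x y = deriv (\<lambda>t. f x (y + t *\<^sub>R axis i 1)) 0"

definition fmetric :: "(real^'n \<Rightarrow> real^'n \<Rightarrow> real) \<Rightarrow> real^'n \<Rightarrow> real^'n \<Rightarrow> 'n::finite \<Rightarrow> 'n \<Rightarrow> real" where
  "fmetric F x y i j = 1/2 * vd i (vd j (\<lambda>x y. (F x y)^2)) x y"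

definition ginv :: "(real^'n \<Rightarrow> real^'n \<Rightarrow> real) \<Rightarrow> real^'n \<Rightarrow> real^'n \<Rightarrow> 'n::finite \<Rightarrow> 'n \<Rightarrow> real" where
  "ginv F x y i j = matrix_inv (\<chi> a b. fmetric F x y a b) $ i $ j"

definition lform :: "(real^'n \<Rightarrow> real^'n \<Rightarrow> real) \<Rightarrow> real^'n \<Rightarrow> real^'n \<Rightarrow> 'n::finite \<Rightarrow> real" where
  "lform F x y i = vd i F x y"

definition hang :: "(real^'n \<Rightarrow> real^'n \<Rightarrow> real) \<Rightarrow> real^'n \<Rightarrow> real^'n \<Rightarrow> 'n::finite \<Rightarrow> 'n \<Rightarrow> real" where
  "hang F x y i j = fmetric F x y i j - lform F x y i * lform F x y j"

definition cartan :: "(real^'n \<Rightarrow> real^'n \<Rightarrow> real) \<Rightarrow> real^'n \<Rightarrow> real^'n \<Rightarrow> 'n::finite \<Rightarrow> 'n \<Rightarrow> 'n \<Rightarrow> real" where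
  "cartan F x y i j k = 1/2 * vd k (\<lambda>x y. fmetric F x y i j) x y"

definition cvec :: "(real^'n \<Rightarrow> real^'n \<Rightarrow> real) \<Rightarrow> real^'n \<Rightarrow> real^'n \<Rightarrow> 'n::finite \<Rightarrow> real" where
  "cvec F x y k = (\<Sum>i\<in>UNIV. \<Sum>j\<in>UNIV. ginv F x y i j * cartan F x y i j k)"

definition csq :: "(real^'n \<Rightarrow> real^'n \<Rightarrow> real) \<Rightarrow> real^'n \<Rightarrow> real^'n \<Rightarrow> real" where
  "csq F x y = (\<Sum>i\<in>(UNIV::'n::finite set). \<Sum>j\<in>UNIV. ginv F x y i j * cvec F x y i * cvec F x y j)"

definition cnorm :: "(real^'n::finite \<Rightarrow> real^'n \<Rightarrow> real) \<Rightarrow> real^'n \<Rightarrow> real^'n \<Rightarrow> real" where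
  "cnorm F x y = sqrt (csq F x y)"

definition cov_inner :: "(real^'n \<Rightarrow> real^'n \<Rightarrow> real) \<Rightarrow> real^'n \<Rightarrow> real^'n \<Rightarrow> ('n::finite \<Rightarrow> real) \<Rightarrow> ('n \<Rightarrow> real) \<Rightarrow> real" where
  "cov_inner F x y u v = (\<Sum>i\<in>UNIV. \<Sum>j\<in>UNIV. ginv F x y i j * u i * v j)"

definition finsler :: "(real^'n::finite) set \<Rightarrow> (real^'n \<Rightarrow> real^'n \<Rightarrow> real) \<Rightarrow> bool" where
  "finsler U F \<longleftrightarrow> open U \<and>
     smooth_on (U \<times> (UNIV - {0})) (\<lambda>(x, y). F x y) \<and>
     (\<forall>x\<in>U. \<forall>y. y \<noteq> 0 \<longrightarrow> F x y > 0) \<and>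
     (\<forall>x\<in>U. \<forall>y. \<forall>t>0. F x (t *\<^sub>R y) = t * F x y) \<and>
     (\<forall>x\<in>U. \<forall>y. y \<noteq> 0 \<longrightarrow>
        (\<forall>v::real^'n. v \<noteq> 0 \<longrightarrow> (\<Sum>i\<in>UNIV. \<Sum>j\<in>UNIV. fmetric F x y i j * v$i * v$j) > 0))"

definition semi_concurrent :: "(real^'n::finite) set \<Rightarrow> (real^'n \<Rightarrow> real^'n \<Rightarrow> real) \<Rightarrow> (real^'n \<Rightarrow> real^'n) \<Rightarrow> bool" where
  "semi_concurrent U F B \<longleftrightarrow>
     (\<forall>x\<in>U. \<forall>y. y \<noteq> 0 \<longrightarrow> (\<forall>i j. (\<Sum>h\<in>UNIV. B x $ h * cartan F x y h i j) = 0))"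

text \<open>C3-like with data a_k, b_k, I, J, n_k: the Cartan tensor decomposition holds, and
  wherever C \<noteq> 0 (so that m_k = C_k/C is defined), a_k = (I m_k + J/3 n_k)/F with n_k a
  unit covector g-orthogonal to l_k and m_k.\<close>
definition C3_like :: "(real^'n::finite) set \<Rightarrow> (real^'n \<Rightarrow> real^'n \<Rightarrow> real)
    \<Rightarrow> (real^'n \<Rightarrow> real^'n \<Rightarrow> 'n \<Rightarrow> real) \<Rightarrow> (real^'n \<Rightarrow> real^'n \<Rightarrow> 'n \<Rightarrow> real)
    \<Rightarrow> (real^'n \<Rightarrow> real^'n \<Rightarrow> real) \<Rightarrow> (real^'n \<Rightarrow> real^'n \<Rightarrow> real)
    \<Rightarrow> (real^'n \<Rightarrow> real^'n \<Rightarrow> 'n \<Rightarrow> real) \<Rightarrow> bool" where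
  "C3_like U F a b I J n \<longleftrightarrow>
     (\<forall>x\<in>U. \<forall>y. y \<noteq> 0 \<longrightarrow>
        (\<forall>i j k. cartan F x y i j k =
            hang F x y i j * a x y k + hang F x y j k * a x y i + hang F x y k i * a x y j
          + cvec F x y i * cvec F x y j * b x y k + cvec F x y j * cvec F x y k * b x y i
          + cvec F x y k * cvec F x y i * b x y j) \<and>
        (cnorm F x y \<noteq> 0 \<longrightarrow>
          (\<forall>k. a x y k = (1 / F x y) * (I x y * (cvec F x y k / cnorm F x y) + J x y / 3 * n x y k)) \<and>
          cov_inner F x y (n x y) (n x y) = 1 \<and>
          cov_inner F x y (n x y) (lform F x y) = 0 \<and>
          cov_inner F x y (n x y) (\<lambda>k. cvec F x y k / cnorm F x y) = 0))"

end

theory Submission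
  imports Defs
begin



lemma deriv_bound_1d:
  fixes \<phi> \<phi>' :: "real \<Rightarrow> real"
  assumes der: "\<And>t. \<bar>t\<bar> \<le> \<bar>a\<bar> \<Longrightarrow> DERIV \<phi> t :> \<phi>' t"
    and bd: "\<And>t. \<bar>t\<bar> \<le> \<bar>a\<bar> \<Longrightarrow> \<bar>\<phi>' t - c\<bar> \<le> e"
  shows "\<bar>\<phi> a - \<phi> 0 - a * c\<bar> \<le> e * \<bar>a\<bar>"
proof (cases "a = 0")
  case True then show ?thesis by simp
next
  case False
  show ?thesis
  proof (cases "a > 0")
    case True
    obtain z where z: "0 < z" "z < a" "\<phi> a - \<phi> 0 = (a - 0) * \<phi>' z"
      using MVT2[of 0 a \<phi> \<phi>'] True der by auto
    have "\<bar>\<phi>' z - c\<bar> \<le> e" using bd z by auto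
    then have "\<bar>a * (\<phi>' z - c)\<bar> \<le> a * e" using True by (simp add: abs_mult)
    then show ?thesis using z True by (simp add: algebra_simps)
  next
    case False
    then have a: "a < 0" using \<open>a \<noteq> 0\<close> by simp
    obtain z where z: "a < z" "z < 0" "\<phi> 0 - \<phi> a = (0 - a) * \<phi>' z"
      using MVT2[of a 0 \<phi> \<phi>'] a der by auto
    have "\<bar>\<phi>' z - c\<bar> \<le> e" using bd z by auto
    then have "\<bar>a * (\<phi>' z - c)\<bar> \<le> (-a) * e" using a by (simp add: abs_mult)
    then show ?thesis using z a by (simp add: algebra_simps)
  qed
qed

lemma sum_axis_expand: "(\<Sum>k\<in>UNIV. h$k *\<^sub>R axis k (1::real)) = (h::real^'n::finite)"
  by (simp add: vec_eq_iff axis_def sum_component if_distrib cong: if_cong)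

lemma frechet_partials:
  fixes f :: "real^'n::finite \<Rightarrow> real" and D :: "'n \<Rightarrow> real^'n \<Rightarrow> real"
  assumes S: "open S" "z \<in> S"
    and der: "\<And>y i. y \<in> S \<Longrightarrow> ((\<lambda>t. f (y + t *\<^sub>R axis i 1)) has_real_derivative D i y) (at 0)"
    and cont: "\<And>i. continuous_on S (D i)"
  shows "(f has_derivative (\<lambda>h. \<Sum>i\<in>UNIV. h$i * D i z)) (at z)"
  unfolding has_derivative_at_alt
proof (intro conjI allI impI)
  show "bounded_linear (\<lambda>h. \<Sum>i\<in>UNIV. h$i * D i z)"
    by (rule bounded_linear_sum) (rule bounded_linear_mult_const[OF bounded_linear_vec_nth])
next
  fix e :: real assume e: "e > 0"
  define e' where "e' = e / real CARD('n)"
  have e': "e' > 0" using e by (simp add: e'_def)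
  have "\<forall>\<^sub>F y in at z. \<forall>i. dist (D i y) (D i z) < e'"
  proof (rule eventually_all_finite)
    fix i
    have "isCont (D i) z" using cont S continuous_on_eq_continuous_at by blast
    then show "\<forall>\<^sub>F y in at z. dist (D i y) (D i z) < e'"
      using e' by (simp add: isCont_def tendstoD)
  qed
  then obtain d1 where d1: "d1 > 0" "\<And>y. y \<noteq> z \<Longrightarrow> dist y z < d1 \<Longrightarrow> \<forall>i. dist (D i y) (D i z) < e'"
    unfolding eventually_at by blast
  obtain d2 where d2: "d2 > 0" "ball z d2 \<subseteq> S" using S open_contains_ball by blast
  show "\<exists>d>0. \<forall>y. norm (y - z) < d \<longrightarrow> norm (f y - f z - (\<Sum>i\<in>UNIV. (y - z)$i * D i z)) \<le> e * norm (y - z)"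
  proof (intro exI[of _ "min d1 d2"] conjI allI impI)
    show "min d1 d2 > 0" using d1 d2 by simp
    fix y assume y: "norm (y - z) < min d1 d2"
    define h where "h = y - z"
    define p where "p K = z + (\<Sum>k\<in>K. h$k *\<^sub>R axis k (1::real))" for K
    have near: "\<And>q. norm (q - z) \<le> norm h \<Longrightarrow> q \<in> S \<and> (\<forall>i. \<bar>D i q - D i z\<bar> \<le> e')"
    proof -
      fix q assume q: "norm (q - z) \<le> norm h"
      have "q \<in> ball z d2" using q y by (simp add: h_def dist_norm norm_minus_commute)
      moreover have "\<forall>i. \<bar>D i q - D i z\<bar> \<le> e'"
      proof (cases "q = z")
        case True then show ?thesis using e' by simp
      next
        case False
        have "dist q z < d1" using q y by (simp add: h_def dist_norm)
        then show ?thesis using d1(2)[OF False] by (auto simp: dist_real_def less_imp_le)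
      qed
      ultimately show "q \<in> S \<and> (\<forall>i. \<bar>D i q - D i z\<bar> \<le> e')" using d2 by auto
    qed
    have claim: "\<bar>f (p K) - f z - (\<Sum>k\<in>K. h$k * D k z)\<bar> \<le> real (card K) * e' * norm h" for K
    proof -
      have "finite K" by simp
      then show ?thesis
      proof (induction K rule: finite_induct)
        case empty then show ?case by (simp add: p_def)
      next
        case (insert k K)
        define \<phi> where "\<phi> t = f (p K + t *\<^sub>R axis k 1)" for t
        define \<phi>' where "\<phi>' t = D k (p K + t *\<^sub>R axis k 1)" for t
        have comp: "norm (p K + t *\<^sub>R axis k 1 - z) \<le> norm h" if t: "\<bar>t\<bar> \<le> \<bar>h$k\<bar>" for t
        proof -
          have "p K + t *\<^sub>R axis k 1 - z = (\<Sum>j\<in>K. h$j *\<^sub>R axis j 1) + t *\<^sub>R axis k 1"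
            by (simp add: p_def)
          also have "norm \<dots> \<le> norm h"
          proof (rule norm_le_componentwise_cart)
            fix j
            have eq: "((\<Sum>j\<in>K. h$j *\<^sub>R axis j 1) + t *\<^sub>R axis k (1::real)) $ j
                  = (if j \<in> K then h$j else 0) + (if j = k then t else 0)"
              by (simp add: sum_component axis_def if_distrib cong: if_cong)
            show "norm (((\<Sum>j\<in>K. h$j *\<^sub>R axis j 1) + t *\<^sub>R axis k (1::real)) $ j) \<le> norm (h $ j)"
              using insert.hyps(2) t by (auto simp: sum_component axis_def if_distrib norm_one cong: if_cong)
          qed
          finally show ?thesis .
        qed
        have "\<bar>\<phi> (h$k) - \<phi> 0 - h$k * D k z\<bar> \<le> e' * \<bar>h$k\<bar>"
        proof (rule deriv_bound_1d)
          fix t assume t: "\<bar>t\<bar> \<le> \<bar>h$k\<bar>"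
          have qS: "p K + t *\<^sub>R axis k 1 \<in> S" and qb: "\<bar>\<phi>' t - D k z\<bar> \<le> e'"
            using near[OF comp[OF t]] by (auto simp: \<phi>'_def)
          have "((\<lambda>s. f (p K + t *\<^sub>R axis k 1 + s *\<^sub>R axis k 1)) has_real_derivative \<phi>' t) (at 0)"
            using der[OF qS] by (simp add: \<phi>'_def)
          then have "((\<lambda>s. \<phi> (s + t)) has_real_derivative \<phi>' t) (at 0)"
            by (simp add: \<phi>_def scaleR_add_left ac_simps)
          then show "DERIV \<phi> t :> \<phi>' t" using DERIV_shift[of \<phi> "\<phi>' t" 0 t] by simp
          show "\<bar>\<phi>' t - D k z\<bar> \<le> e'" by (rule qb)
        qed
        moreover have "\<phi> (h$k) = f (p (insert k K))" using insert.hyps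
          by (simp add: \<phi>_def p_def add.assoc add.commute add.left_commute)
        moreover have "\<phi> 0 = f (p K)" by (simp add: \<phi>_def)
        moreover have "\<bar>h$k\<bar> \<le> norm h" by (rule component_le_norm_cart)
        ultimately have A: "\<bar>f (p (insert k K)) - f (p K) - h$k * D k z\<bar> \<le> e' * norm h"
          using e' by (smt (verit) mult_left_mono)
        have "f (p (insert k K)) - f z - (\<Sum>j\<in>insert k K. h$j * D j z)
              = (f (p (insert k K)) - f (p K) - h$k * D k z) + (f (p K) - f z - (\<Sum>j\<in>K. h$j * D j z))"
          using insert.hyps by simp
        then have "\<bar>f (p (insert k K)) - f z - (\<Sum>j\<in>insert k K. h$j * D j z)\<bar> \<le> e' * norm h + real (card K) * e' * norm h"
          using A insert.IH by linarith
        then show ?case using insert.hyps by (simp add: algebra_simps)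
      qed
    qed
    have "p UNIV = y" unfolding p_def sum_axis_expand h_def by simp
    then have "\<bar>f y - f z - (\<Sum>k\<in>UNIV. h$k * D k z)\<bar> \<le> real CARD('n) * e' * norm h"
      using claim[of UNIV] by simp
    then show "norm (f y - f z - (\<Sum>i\<in>UNIV. (y - z)$i * D i z)) \<le> e * norm (y - z)"
      by (simp add: e'_def h_def)
  qed
qed



lemma ev_line:
  fixes y v :: "'a::real_normed_vector"
  assumes "open A" "y \<in> A"
  shows "\<forall>\<^sub>F t in nhds (0::real). y + t *\<^sub>R v \<in> A"
proof -
  have "((\<lambda>t::real. y + t *\<^sub>R v) \<longlongrightarrow> y) (at 0)"
    by (auto intro!: tendsto_eq_intros)
  then have "\<forall>\<^sub>F t in at (0::real). y + t *\<^sub>R v \<in> A"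
    using assms topological_tendstoD by blast
  then show ?thesis using assms by (simp add: eventually_nhds_conv_at)
qed

lemma line_deriv:
  fixes g :: "real^'n::finite \<Rightarrow> real"
  assumes "(g has_derivative (\<lambda>v. \<Sum>k\<in>UNIV. v$k * Dg k)) (at (y + t *\<^sub>R u))"
  shows "((\<lambda>s. g (y + s *\<^sub>R u)) has_real_derivative (\<Sum>k\<in>UNIV. u$k * Dg k)) (at t)"
proof -
  have l: "((\<lambda>s. y + s *\<^sub>R u) has_derivative (\<lambda>s. s *\<^sub>R u)) (at t)"
    by (auto intro!: derivative_eq_intros)
  have "((\<lambda>s. g (y + s *\<^sub>R u)) has_derivative (\<lambda>s. \<Sum>k\<in>UNIV. (s *\<^sub>R u)$k * Dg k)) (at t)"
    using has_derivative_compose[OF l assms] by simp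
  moreover have "(\<lambda>s. \<Sum>k\<in>UNIV. (s *\<^sub>R u)$k * Dg k) = (\<lambda>s. s * (\<Sum>k\<in>UNIV. u$k * Dg k))"
    by (auto simp: sum_distrib_left algebra_simps)
  ultimately have "((\<lambda>s. g (y + s *\<^sub>R u)) has_derivative (\<lambda>s. s * (\<Sum>k\<in>UNIV. u$k * Dg k))) (at t)"
    by simp
  moreover have "(\<lambda>s. s * (\<Sum>k\<in>UNIV. u$k * Dg k)) = (*) (\<Sum>k\<in>UNIV. u$k * Dg k)"
    by (auto simp: fun_eq_iff)
  ultimately show ?thesis by (simp add: has_field_derivative_def)
qed



lemma ray_linear:
  fixes f :: "real^'n::finite \<Rightarrow> real" and G :: "'n \<Rightarrow> real^'n \<Rightarrow> real"
  assumes fr: "\<And>y. y \<noteq> 0 \<Longrightarrow> (f has_derivative (\<lambda>v. \<Sum>k\<in>UNIV. v$k * G k y)) (at y)"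
    and hom: "\<And>y s. y \<noteq> 0 \<Longrightarrow> s > 0 \<Longrightarrow> f (s *\<^sub>R y) = s * f y"
    and Phi: "\<And>y. y \<noteq> 0 \<Longrightarrow> (\<Sum>k\<in>UNIV. u$k * G k y) = c"
    and u: "u \<noteq> 0"
    and y: "\<forall>t\<ge>0. y + t *\<^sub>R u \<noteq> 0"
  shows "f y = (\<Sum>k\<in>UNIV. y$k * G k u)"
proof -
  have seg: "f (y + T *\<^sub>R u) = f y + T * c" if T: "T > 0" for T
  proof -
    define g where "g t = f (y + t *\<^sub>R u) - t * c" for t
    have d: "DERIV g t :> 0" if "t \<ge> 0" for t
    proof -
      have nz: "y + t *\<^sub>R u \<noteq> 0" using y that by auto
      have "((\<lambda>s. f (y + s *\<^sub>R u)) has_real_derivative (\<Sum>k\<in>UNIV. u$k * G k (y + t *\<^sub>R u))) (at t)"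
        by (rule line_deriv) (rule fr[OF nz])
      then have "((\<lambda>s. f (y + s *\<^sub>R u)) has_real_derivative c) (at t)" using Phi[OF nz] by simp
      then show ?thesis unfolding g_def by (auto intro!: derivative_eq_intros)
    qed
    have "continuous_on {0..T} g"
      using d by (meson DERIV_continuous atLeastAtMost_iff continuous_at_imp_continuous_on)
    then have "g T = g 0" using DERIV_isconst_end[OF T] d by auto
    then show ?thesis by (simp add: g_def)
  qed
  have gs: "f (u + s *\<^sub>R y) = s * f y + c" if s: "s > 0" for s
  proof -
    have "u + s *\<^sub>R y = s *\<^sub>R (y + (1/s) *\<^sub>R u)" using s by (simp add: algebra_simps)
    moreover have "y + (1/s) *\<^sub>R u \<noteq> 0" using y s by auto
    ultimately have "f (u + s *\<^sub>R y) = s * f (y + (1/s) *\<^sub>R u)" using hom s by simp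
    also have "\<dots> = s * f y + c" using seg[of "1/s"] s by (simp add: algebra_simps)
    finally show ?thesis .
  qed
  define g where "g s = f (u + s *\<^sub>R y)" for s
  define L where "L = (\<Sum>k\<in>UNIV. y$k * G k u)"
  have dg: "DERIV g 0 :> L"
    unfolding g_def L_def using line_deriv[of f "\<lambda>k. G k u" u 0 y] fr[OF u] by simp
  have ev: "\<forall>\<^sub>F s in at_right 0. g s = s * f y + c"
    using eventually_at_right_less[of "0::real"] by eventually_elim (simp add: g_def gs)
  have "(g \<longlongrightarrow> g 0) (at 0)" using DERIV_continuous[OF dg] by (simp add: isCont_def)
  then have "(g \<longlongrightarrow> g 0) (at_right 0)" by (rule tendsto_within_subset) simp
  then have "((\<lambda>s. s * f y + c) \<longlongrightarrow> g 0) (at_right 0)" using tendsto_cong[OF ev] by simp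
  moreover have "((\<lambda>s. s * f y + c) \<longlongrightarrow> 0 * f y + c) (at_right (0::real))" by (intro tendsto_intros)
  ultimately have g0: "g 0 = c" using tendsto_unique trivial_limit_at_right_real by fastforce
  have "((\<lambda>s. (g s - g 0) / (s - 0)) \<longlongrightarrow> L) (at 0)" using dg by (simp add: has_field_derivative_iff)
  then have q: "((\<lambda>s. (g s - g 0) / (s - 0)) \<longlongrightarrow> L) (at_right 0)" by (rule tendsto_within_subset) simp
  have ev2: "\<forall>\<^sub>F s in at_right 0. (g s - g 0) / (s - 0) = f y"
    using ev eventually_at_right_less[of "0::real"] by eventually_elim (simp add: g0)
  have "((\<lambda>s. f y) \<longlongrightarrow> L) (at_right (0::real))" using tendsto_cong[OF ev2] q by simp
  then show ?thesis using tendsto_unique[OF trivial_limit_at_right_real tendsto_const] unfolding L_def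
    by metis
qed

lemma grad_const:
  fixes f :: "real^'n::finite \<Rightarrow> real" and G :: "'n \<Rightarrow> real^'n \<Rightarrow> real"
  assumes A: "\<And>y h. y \<noteq> 0 \<Longrightarrow> ((\<lambda>t. f (y + t *\<^sub>R axis h 1)) has_real_derivative G h y) (at 0)"
    and fr: "\<And>y. y \<noteq> 0 \<Longrightarrow> (f has_derivative (\<lambda>v. \<Sum>k\<in>UNIV. v$k * G k y)) (at y)"
    and hom: "\<And>y s. y \<noteq> 0 \<Longrightarrow> s > 0 \<Longrightarrow> f (s *\<^sub>R y) = s * f y"
    and Phi: "\<And>y. y \<noteq> 0 \<Longrightarrow> (\<Sum>k\<in>UNIV. u$k * G k y) = c"
    and u: "u \<noteq> 0"
    and y: "\<forall>t\<ge>0. y + t *\<^sub>R u \<noteq> 0"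
  shows "G h y = G h u"
proof -
  define Au where "Au = - ((\<lambda>t::real. t *\<^sub>R (-u)) ` {0..})"
  have memA: "z \<in> Au \<longleftrightarrow> (\<forall>t\<ge>0. z + t *\<^sub>R u \<noteq> 0)" for z
  proof -
    have "z + t *\<^sub>R u = 0 \<longleftrightarrow> z = t *\<^sub>R (-u)" for t
      by (auto simp: algebra_simps eq_neg_iff_add_eq_0)
    then show ?thesis unfolding Au_def by auto
  qed
  have "closed ((\<lambda>t::real. t *\<^sub>R (-u)) ` {0..})"
  proof (rule closed_injective_linear_image)
    show "closed {0::real..}" by simp
    show "linear (\<lambda>t::real. t *\<^sub>R (-u))" by (rule bounded_linear.linear[OF bounded_linear_scaleR_left])
    show "inj (\<lambda>t::real. t *\<^sub>R (-u))" using u by (auto simp: inj_on_def)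
  qed
  then have oA: "open Au" unfolding Au_def by (simp add: open_Compl)
  have yA: "y \<in> Au" using y memA by simp
  have y0: "y \<noteq> 0" using y[rule_format, of 0] by simp
  have ev: "\<forall>\<^sub>F t in nhds 0. y + t *\<^sub>R axis h 1 \<in> Au" by (rule ev_line[OF oA yA])
  have ev': "\<forall>\<^sub>F t in nhds 0. f (y + t *\<^sub>R axis h 1) = (\<Sum>k\<in>UNIV. y$k * G k u) + t * G h u"
    using ev
  proof eventually_elim
    case (elim t)
    then have "f (y + t *\<^sub>R axis h 1) = (\<Sum>k\<in>UNIV. (y + t *\<^sub>R axis h 1)$k * G k u)"
      using ray_linear[OF fr hom Phi u] memA by blast
    also have "\<dots> = (\<Sum>k\<in>UNIV. y$k * G k u) + t * G h u"
    proof -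
      have "(y + t *\<^sub>R axis h 1)$k * G k u = y$k * G k u + (if k = h then t * G h u else 0)" for k
        by (simp add: axis_def algebra_simps)
      then show ?thesis by (simp add: sum.distrib)
    qed
    finally show ?case .
  qed
  moreover have "((\<lambda>t. (\<Sum>k\<in>UNIV. y$k * G k u) + t * G h u) has_real_derivative G h u) (at 0)"
    by (auto intro!: derivative_eq_intros)
  ultimately have "((\<lambda>t. f (y + t *\<^sub>R axis h 1)) has_real_derivative G h u) (at 0)"
    using DERIV_cong_ev[OF refl ev' refl] by simp
  then show ?thesis using A[OF y0] DERIV_unique by blast
qed



lemma core:
  fixes f :: "'n::finite \<Rightarrow> real^'n \<Rightarrow> real" and G :: "'n \<Rightarrow> 'n \<Rightarrow> real^'n \<Rightarrow> real"
    and H :: "'n \<Rightarrow> 'n \<Rightarrow> 'n \<Rightarrow> real^'n \<Rightarrow> real" and w :: "real^'n"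
  assumes n2: "2 \<le> CARD('n)" and w: "w \<noteq> 0"
    and A: "\<And>y i h. y \<noteq> 0 \<Longrightarrow> ((\<lambda>t. f i (y + t *\<^sub>R axis h 1)) has_real_derivative G h i y) (at 0)"
    and B: "\<And>y j h i. y \<noteq> 0 \<Longrightarrow> ((\<lambda>t. G h i (y + t *\<^sub>R axis j 1)) has_real_derivative H j h i y) (at 0)"
    and C: "\<And>h i. continuous_on (-{0}) (G h i)"
    and D: "\<And>y i s. y \<noteq> 0 \<Longrightarrow> s > 0 \<Longrightarrow> f i (s *\<^sub>R y) = s * f i y"
    and E: "\<And>y j i. y \<noteq> 0 \<Longrightarrow> (\<Sum>h\<in>UNIV. w$h * H j h i y) = 0"
    and y: "y \<noteq> 0"
  shows "G h i y = G h i w"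
proof -
  have fr: "(f i has_derivative (\<lambda>v. \<Sum>k\<in>UNIV. v$k * G k i y')) (at y')" if "y' \<noteq> 0" for i y'
    by (rule frechet_partials[where S="-{0}"]) (use that A C in auto)
  have conn: "connected (-{0::real^'n})"
    using path_connected_punctured_universe[of "0::real^'n"] n2 path_connected_imp_connected by simp
  have Phi: "(\<Sum>h\<in>UNIV. w$h * G h i y') = (\<Sum>h\<in>UNIV. w$h * G h i w)" if "y' \<noteq> 0" for i y'
  proof -
    define \<Phi> where "\<Phi> z = (\<Sum>h\<in>UNIV. w$h * G h i z)" for z
    have "(\<Phi> has_derivative (\<lambda>v. \<Sum>j\<in>UNIV. v$j * 0)) (at z)" if "z \<in> -{0}" for z
    proof (rule frechet_partials[where S="-{0}"])
      fix z' j assume z': "z' \<in> -{0::real^'n}"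
      have "((\<lambda>t. \<Phi> (z' + t *\<^sub>R axis j 1)) has_real_derivative (\<Sum>h\<in>UNIV. w$h * H j h i z')) (at 0)"
        unfolding \<Phi>_def using z' by (intro DERIV_sum DERIV_cmult B) auto
      then show "((\<lambda>t. \<Phi> (z' + t *\<^sub>R axis j 1)) has_real_derivative 0) (at 0)"
        using E z' by simp
    qed (use that in auto)
    then have "\<forall>z\<in>-{0}-{}. (\<Phi> has_derivative (\<lambda>h. 0)) (at z within -{0})"
      by (simp add: has_derivative_at_withinI)
    moreover have "continuous_on (-{0}) \<Phi>"
      unfolding \<Phi>_def by (intro continuous_intros C)
    ultimately have "\<Phi> constant_on -{0}"
      using has_derivative_zero_connected_constant_on[OF conn _ finite.emptyI] by auto
    then show ?thesis using that w unfolding constant_on_def \<Phi>_def by (metis ComplI singletonD)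
  qed
  obtain k where k: "w$k \<noteq> 0" using w by (metis vec_eq_iff zero_index)
  obtain k' where k': "k' \<noteq> k"
  proof -
    have "\<not> (UNIV \<subseteq> {k})"
    proof
      assume "UNIV \<subseteq> {k}"
      then have "card (UNIV::'n set) \<le> card {k}" by (intro card_mono) auto
      then show False using n2 by simp
    qed
    then show ?thesis using that by blast
  qed
  define y0 :: "real^'n" where "y0 = axis k' 1"
  have y0: "y0 + t *\<^sub>R u \<noteq> 0" if "u = w \<or> u = -w" for t u
  proof
    assume "y0 + t *\<^sub>R u = 0"
    then have "(y0 + t *\<^sub>R u)$k = 0" "(y0 + t *\<^sub>R u)$k' = 0" by simp_all
    then show False using that k k' by (auto simp: y0_def axis_def)
  qed
  have gc: "G h i z = G h i u" if u: "u = w \<or> u = -w" and z: "\<forall>t\<ge>0. z + t *\<^sub>R u \<noteq> 0" for u z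
  proof (rule grad_const[where f="f i" and G="\<lambda>h. G h i" and c="\<Sum>h\<in>UNIV. u$h * G h i w"])
    show "u \<noteq> 0" using u w by auto
    fix y' :: "real^'n" assume y': "y' \<noteq> 0"
    show "(\<Sum>k\<in>UNIV. u$k * G k i y') = (\<Sum>h\<in>UNIV. u$h * G h i w)"
      using u Phi[OF y'] by (auto simp: sum_negf)
  qed (use z A fr D in auto)
  have g1: "G h i y0 = G h i w" using gc[of w y0] y0 by auto
  have "\<forall>t\<ge>0. y0 + t *\<^sub>R (-w) \<noteq> 0" using y0 by blast
  then have g2: "G h i y0 = G h i (-w)" using gc[of "-w" y0] by blast
  show ?thesis
  proof (cases "\<forall>t\<ge>0. y + t *\<^sub>R w \<noteq> 0")
    case True then show ?thesis using gc[of w y] by auto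
  next
    case False
    then obtain t where t: "t \<ge> 0" "y + t *\<^sub>R w = 0" by auto
    have "\<forall>s\<ge>0. y + s *\<^sub>R (-w) \<noteq> 0"
    proof (intro allI impI notI)
      fix s :: real assume s: "s \<ge> 0" "y + s *\<^sub>R (-w) = 0"
      then have "(t + s) *\<^sub>R w = 0" using t by (simp add: algebra_simps)
      then have "t + s = 0" using w by simp
      then have "t = 0" using t s by simp
      then show False using t y by simp
    qed
    then show ?thesis using gc[of "-w" y] g1 g2 by auto
  qed
qed



lemma card1_case:
  fixes B :: "real^'n::finite" and c :: "'n \<Rightarrow> 'n \<Rightarrow> 'n \<Rightarrow> real"
  assumes "CARD('n) < 2" "B \<noteq> 0" "\<And>i j. (\<Sum>h\<in>UNIV. B $ h * c h i j) = 0"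
  shows "c i j k = 0"
proof -
  have all: "\<And>a b::'n. a = b"
  proof -
    fix a b :: 'n
    show "a = b"
    proof (rule ccontr)
      assume "a \<noteq> b"
      then have "card {a, b} \<le> CARD('n)" by (intro card_mono) auto
      then show False using assms(1) \<open>a \<noteq> b\<close> by simp
    qed
  qed
  then have U: "(UNIV::'n set) = {i}" by auto
  have "B $ i \<noteq> 0" using assms(2) all by (metis vec_eq_iff zero_index)
  moreover have "B $ i * c i i i = 0" using assms(3)[of i i] unfolding U by simp
  ultimately have "c i i i = 0" by simp
  then show ?thesis using all[of j i] all[of k i] by simp
qed



theorem mainTheorem2:
  fixes U :: "(real^'n::finite) set"
    and F :: "real^'n \<Rightarrow> real^'n \<Rightarrow> real"
    and B :: "real^'n \<Rightarrow> real^'n"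
    and a b n :: "real^'n \<Rightarrow> real^'n \<Rightarrow> 'n \<Rightarrow> real"
    and I J :: "real^'n \<Rightarrow> real^'n \<Rightarrow> real"
  assumes "finsler U F"
    and "C3_like U F a b I J n"
    and "\<forall>i. smooth_on U (\<lambda>x. B x $ i)"
    and "\<forall>x\<in>U. B x \<noteq> 0"
    and "semi_concurrent U F B"
    and "\<forall>x\<in>U. \<forall>y. y \<noteq> 0 \<longrightarrow> J x y = 0"
  shows "\<forall>x\<in>U. \<forall>y. y \<noteq> 0 \<longrightarrow> (\<forall>i j k. cartan F x y i j k = 0)"
proof (intro ballI allI impI)
  fix x y i j k
  assume x: "x \<in> U" and y: "y \<noteq> (0::real^'n)"
  have Bx: "B x \<noteq> 0" using assms(4) x by auto
  have sc: "\<And>y' i j. y' \<noteq> 0 \<Longrightarrow> (\<Sum>h\<in>UNIV. B x $ h * cartan F x y' h i j) = 0"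
    using assms(5) x unfolding semi_concurrent_def by auto
  show "cartan F x y i j k = 0"
  proof (cases "CARD('n) < 2")
    case True
    then show ?thesis using card1_case[OF True Bx, of "\<lambda>h i j. cartan F x y h i j"] sc[OF y] by auto
  next
    case False
    then have n2: "2 \<le> CARD('n)" by simp
    define P where "P = (\<lambda>(x, y). F x y)"
    have fin: "finsler U F" by (rule assms(1))
    then have sm: "smooth_on (U \<times> (UNIV - {0})) P" unfolding finsler_def P_def by auto
    have hom: "\<And>y' s. s > 0 \<Longrightarrow> F x (s *\<^sub>R y') = s * F x y'" using fin x unfolding finsler_def by auto
    define ev :: "'n \<Rightarrow> (real^'n) \<times> (real^'n)" where "ev a = (0, axis a 1)" for a
    have evB: "ev a \<in> Basis" for a by (simp add: ev_def Basis_prod_def)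
    have gen: "((\<lambda>t. iter_dirderiv vs P (x, y' + t *\<^sub>R axis a 1)) has_real_derivative
                 iter_dirderiv (ev a # vs) P (x, y')) (at 0)"
      if "set vs \<subseteq> Basis" "y' \<noteq> 0" for vs a y'
    proof -
      have "(x, y') \<in> U \<times> (UNIV - {0})" using x that by auto
      then have "(\<lambda>t. iter_dirderiv vs P ((x, y') + t *\<^sub>R ev a)) differentiable (at 0)"
        using sm that evB unfolding smooth_on_def by blast
      moreover have "(\<lambda>t. iter_dirderiv vs P ((x, y') + t *\<^sub>R ev a)) = (\<lambda>t. iter_dirderiv vs P (x, y' + t *\<^sub>R axis a 1))"
        by (simp add: ev_def)
      ultimately show ?thesis
        by (simp add: DERIV_deriv_iff_real_differentiable dirderiv_def)
    qed
    have gcont: "continuous_on (-{0}) (\<lambda>y'. iter_dirderiv vs P (x, y'))" if "set vs \<subseteq> Basis" for vs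
    proof -
      have c: "continuous_on (U \<times> (UNIV - {0})) (iter_dirderiv vs P)" using sm that unfolding smooth_on_def by blast
      show ?thesis
        by (rule continuous_on_compose2[OF c]) (auto intro!: continuous_intros simp: x)
    qed
    define F0 where "F0 y' = F x y'" for y'
    define F1 where "F1 a y' = iter_dirderiv [ev a] P (x, y')" for a y'
    define F2 where "F2 a b y' = iter_dirderiv [ev a, ev b] P (x, y')" for a b y'
    define F3 where "F3 a b c y' = iter_dirderiv [ev a, ev b, ev c] P (x, y')" for a b c y'
    have d0: "((\<lambda>t. F0 (y' + t *\<^sub>R axis a 1)) has_real_derivative F1 a y') (at 0)" if "y' \<noteq> 0" for a y'
      using gen[of "[]" y' a] that by (simp add: F0_def F1_def P_def)
    have d1: "((\<lambda>t. F1 b (y' + t *\<^sub>R axis a 1)) has_real_derivative F2 a b y') (at 0)" if "y' \<noteq> 0" for a b y'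
      using gen[of "[ev b]" y' a] that evB by (simp add: F1_def F2_def)
    have d2: "((\<lambda>t. F2 b c (y' + t *\<^sub>R axis a 1)) has_real_derivative F3 a b c y') (at 0)" if "y' \<noteq> 0" for a b c y'
      using gen[of "[ev b, ev c]" y' a] that evB by (simp add: F2_def F3_def)
    have c0: "continuous_on (-{0}) F0" using gcont[of "[]"] by (simp add: F0_def P_def)
    have c1: "continuous_on (-{0}) (F1 a)" for a using gcont[of "[ev a]"] evB by (simp add: F1_def)
    have c2: "continuous_on (-{0}) (F2 a b)" for a b using gcont[of "[ev a, ev b]"] evB by (simp add: F2_def)
    define f where "f a y' = 2 * F0 y' * F1 a y'" for a y'
    define G where "G b a y' = 2 * (F1 b y' * F1 a y' + F0 y' * F2 b a y')" for b a y'
    define H where "H j b a y' = 2 * (F2 j b y' * F1 a y' + F1 b y' * F2 j a y' + F1 j y' * F2 b a y' + F0 y' * F3 j b a y')" for j b a y'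
    have A: "((\<lambda>t. f a (y' + t *\<^sub>R axis b 1)) has_real_derivative G b a y') (at 0)" if "y' \<noteq> 0" for y' a b
      unfolding f_def G_def using d0[OF that, of b] d1[OF that, of a b]
      by (auto intro!: derivative_eq_intros simp: algebra_simps)
    have Bd: "((\<lambda>t. G b a (y' + t *\<^sub>R axis j 1)) has_real_derivative H j b a y') (at 0)" if "y' \<noteq> 0" for y' j b a
      unfolding G_def H_def using d0[where a=j, OF that] d1[where a=j and b=a, OF that] d1[where a=j and b=b, OF that] d2[where a=j and b=b and c=a, OF that]
      by (auto intro!: derivative_eq_intros simp: algebra_simps)
    have C: "continuous_on (-{0}) (G b a)" for b a
      unfolding G_def by (intro continuous_intros c0 c1 c2)
    have F1hom: "F1 a (s *\<^sub>R y') = F1 a y'" if "y' \<noteq> 0" "s > 0" for a s y'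
    proof -
      have sy: "s *\<^sub>R y' \<noteq> 0" using that by simp
      have e: "(\<lambda>t. F0 (s *\<^sub>R y' + t *\<^sub>R axis a 1)) = (\<lambda>t. s * F0 (y' + (t / s) *\<^sub>R axis a 1))"
      proof
        fix t
        have "s *\<^sub>R y' + t *\<^sub>R axis a 1 = s *\<^sub>R (y' + (t / s) *\<^sub>R axis a 1)" using that by (simp add: algebra_simps)
        then show "F0 (s *\<^sub>R y' + t *\<^sub>R axis a 1) = s * F0 (y' + (t / s) *\<^sub>R axis a 1)"
          using hom[OF that(2)] by (simp add: F0_def)
      qed
      have d0': "DERIV (\<lambda>u. F0 (y' + u *\<^sub>R axis a 1)) (0 / s) :> F1 a y'" using d0[OF that(1), of a] by simp
      have dg: "DERIV (\<lambda>t. t / s) 0 :> 1 / s" using that(2) by (auto intro!: derivative_eq_intros)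
      have "((\<lambda>t. F0 (y' + (t / s) *\<^sub>R axis a 1)) has_real_derivative F1 a y' * (1 / s)) (at 0)"
        using DERIV_chain2[OF d0' dg] by simp
      then have "((\<lambda>t. s * F0 (y' + (t / s) *\<^sub>R axis a 1)) has_real_derivative s * (F1 a y' * (1 / s))) (at 0)"
        by (rule DERIV_cmult)
      then have "((\<lambda>t. F0 (s *\<^sub>R y' + t *\<^sub>R axis a 1)) has_real_derivative F1 a y') (at 0)"
        using that e by simp
      then show ?thesis using d0[OF sy, of a] DERIV_unique by blast
    qed
    have D: "f a (s *\<^sub>R y') = s * f a y'" if "y' \<noteq> 0" "s > 0" for a s y'
      using F1hom[OF that] hom[OF that(2)] by (simp add: f_def F0_def)
    define L' where "L' = (\<lambda>x y. (F x y)^2)"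
    have vdL: "vd a L' x y' = f a y'" if "y' \<noteq> 0" for a y'
    proof -
      have "((\<lambda>t. (F0 (y' + t *\<^sub>R axis a 1))^2) has_real_derivative f a y') (at 0)"
        unfolding f_def using d0[OF that, of a] by (auto intro!: derivative_eq_intros simp: algebra_simps)
      then show ?thesis unfolding vd_def L'_def F0_def by (rule DERIV_imp_deriv)
    qed
    have evnz: "\<forall>\<^sub>F t in nhds 0. y' + t *\<^sub>R axis a 1 \<noteq> 0" if "y' \<noteq> 0" for y' :: "real^'n" and a
      using ev_line[of "-{0}" y'] that by auto
    have fm: "fmetric F x y' b a = G b a y' / 2" if "y' \<noteq> 0" for y' a b
    proof -
      have "\<forall>\<^sub>F t in nhds 0. vd a L' x (y' + t *\<^sub>R axis b 1) = f a (y' + t *\<^sub>R axis b 1)"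
        using evnz[OF that, of b] by eventually_elim (simp add: vdL)
      then have "((\<lambda>t. vd a L' x (y' + t *\<^sub>R axis b 1)) has_real_derivative G b a y') (at 0)"
        using DERIV_cong_ev[OF refl _ refl] A[OF that] by (metis (no_types))
      then have "vd b (vd a L') x y' = G b a y'" unfolding vd_def[of b] by (rule DERIV_imp_deriv)
      then show ?thesis unfolding fmetric_def L'_def by simp
    qed
    have cart: "cartan F x y' h a c = H c h a y' / 4" if "y' \<noteq> 0" for y' h a c
    proof -
      have ev1: "\<forall>\<^sub>F t in nhds 0. fmetric F x (y' + t *\<^sub>R axis c 1) h a = G h a (y' + t *\<^sub>R axis c 1) / 2"
        using evnz[OF that, of c] by eventually_elim (simp add: fm)
      moreover have "((\<lambda>t. G h a (y' + t *\<^sub>R axis c 1) / 2) has_real_derivative H c h a y' / 2) (at 0)"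
        using Bd[OF that] by (rule DERIV_cdivide)
      ultimately have "((\<lambda>t. fmetric F x (y' + t *\<^sub>R axis c 1) h a) has_real_derivative H c h a y' / 2) (at 0)"
        using DERIV_cong_ev[OF refl ev1 refl] by simp
      then have "vd c (\<lambda>x y. fmetric F x y h a) x y' = H c h a y' / 2" unfolding vd_def by (rule DERIV_imp_deriv)
      then show ?thesis unfolding cartan_def by simp
    qed
    have E: "(\<Sum>h\<in>UNIV. B x $ h * H c h a y') = 0" if "y' \<noteq> 0" for y' c a
    proof -
      have "(\<Sum>h\<in>UNIV. B x $ h * H c h a y') = 4 * (\<Sum>h\<in>UNIV. B x $ h * cartan F x y' h a c)"
        by (simp add: cart[OF that] sum_distrib_left)
      then show ?thesis using sc[OF that] by simp
    qed
    have Gc: "G h a y' = G h a (B x)" if "y' \<noteq> 0" for h a y'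
      by (rule core[OF n2 Bx A Bd C D E that])
    have ev2: "\<forall>\<^sub>F t in nhds 0. G i j (y + t *\<^sub>R axis k 1) = G i j (B x)"
      using evnz[OF y, of k] by eventually_elim (simp add: Gc)
    then have "((\<lambda>t. G i j (y + t *\<^sub>R axis k 1)) has_real_derivative 0) (at 0)"
      using DERIV_cong_ev[OF refl ev2 refl] DERIV_const by simp
    then have "H k i j y = 0" using Bd[OF y] DERIV_unique by blast
    then show ?thesis using cart[OF y, of i j k] by simp
  qed
qed


end
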